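(* In the setting described in the context, assume $G$ satisfies Condition 1. Then for each non-faulty agent $i$, the limit of $|y(t)-x_i(t)|$ as $t\to\infty$ exists and $\lim_{t\to\infty}|y(t)-x_i(t)|=0$.
   Context: A synchronous system of $n$ agents communicates over a directed graph $G=(\mathcal{V},\mathcal{E})$, $\mathcal{V}=\{1,\dots,n\}$, without self-loops; $N_i^-=\{j:(j,i)\in\mathcal{E}\}$. At most $f$ agents are Byzantine faulty (may send arbitrary, possibly inconsistent values); $\mathcal{F}$ is the set of faulty agents, $\phi=|\mathcal{F}|\le f$, non-faulty agents indexed $1,\dots,n-\phi$. Assignment matrix $\mathbf{A}\in\mathbb{R}^{k\times n}$: nonnegative entries, columns summing to $1$; agent $i$ holds $g_i=\sum_{j=1}^k\mathbf{A}_{ji}h_j$ for admissible (convex, $L$-Lipschitz, nonempty compact argmin) $h_1,\dots,h_k:\mathbb{R}\to\mathbb{R}$. Sparsity parameter $sp(\mathbf{A})$: smallest $s$ such that the sum of any $s$ columns of $\mathbf{A}$ is component-wise positive ($n+1$ if the sum of all columns is not). Reduced graph w.r.t. $\mathcal{F}$: subgraph of $G$ obtained by removing the nodes of $\mathcal{F}$ with their edges and then up to $f$ additional incoming edges at each remaining node; $R_{\mathcal{F}}$ the set of reduced graphs, $\tau=|R_{\mathcal{F}}|$. Source component: set of nodes each having a directed path to every other node of the graph. Condition 1: for every $\mathcal{F}'\subseteq\mathcal{V}$ with $|\mathcal{F}'|\le f$, every reduced graph w.r.t. $\mathcal{F}'$ has a source component with at least $\max\{f+1,sp(\mathbf{A})\}$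 nodes. Step sizes: $\alpha(t)\ge0$ with $\alpha(t+1)\le\alpha(t)$, $\sum_t\alpha(t)=\infty$, $\sum_t\alpha^2(t)<\infty$. Algorithm 2: arbitrary $x_i(0)$; in iteration $t\ge1$ non-faulty agent $i$ sends $x_i(t-1)$ to all out-neighbors, receives $|N_i^-|$ values (default for missing), discards the $f$ smallest and $f$ largest, lets $N_i^*(t)$ be the senders of the remaining values with values $w_j$, sets $w_i=x_i(t-1)$, and updates $x_i(t)=\frac{1}{|N_i^*(t)|+1}\sum_{j\in\{i\}\cup N_i^*(t)}w_j-\alpha(t-1)d_i(t-1)$, $d_i(t-1)$ a subgradient of $g_i$ at $x_i(t-1)$. Known facts: with $\mathbf{x}(t)$ the non-faulty states and $\mathbf{d}(t)=(d_1(t),\dots,d_{n-\phi}(t))$, $\mathbf{x}(t+1)=\mathbf{M}(t)\mathbf{x}(t)-\alpha(t)\mathbf{d}(t)$ with row-stochastic $\mathbf{M}(t)$, and there is $0<\beta<1$ with $\mathbf{M}(t)\ge\beta\mathbf{H}(t)$ entrywise for the adjacency matrix $\mathbf{H}(t)$ (including diagonal ones) of some reduced graph in $R_{\mathcal{F}}$. Let $\Phi(t,r)=\mathbf{M}(t)\cdots\mathbf{M}(r)$ for $t\ge r$, $\Phi(t,t+1)=I$, $\nu=\tau(n-\phi)$, $\gamma=1-\beta^\nu$. Under Condition 1, for each $r$, $\lim_{t\to\infty}\Phi(t,r)=\mathbf{1}\pi(r)$ for a stochastic row vector $\pi(r)$, and $|\Phi_{ij}(t,r)-\pi_j(r)|\le\gamma^{\lceil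 (t-r+1)/\nu\rceil}$ for all $t\ge r$. Define $y(t)=\sum_{j=1}^{n-\phi}\pi_j(0)x_j(0)-\sum_{r=1}^{t}\alpha(r-1)\sum_{j=1}^{n-\phi}\pi_j(r)d_j(r-1)$. *)

theory Defs
  imports "HOL-Analysis.Analysis"
begin

text \<open>Agents are 1..n; the graph is an edge set E of pairs (j,i) meaning j -> i.\<close>

definition in_nbrs :: "(nat \<times> nat) set \<Rightarrow> nat \<Rightarrow> nat set" where
  "in_nbrs E i = {j. (j, i) \<in> E}"

definition digraph_ok :: "nat \<Rightarrow> (nat \<times> nat) set \<Rightarrow> bool" where
  "digraph_ok n E \<longleftrightarrow> E \<subseteq> {1..n} \<times> {1..n} \<and> (\<forall>i. (i, i) \<notin> E)"

text \<open>E' (on vertex set {1..n} - F) is a reduced graph of E w.r.t. F: remove F with its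
  edges, then up to f further incoming edges at each remaining node.\<close>
definition reduced_graph ::
  "nat \<Rightarrow> nat \<Rightarrow> (nat \<times> nat) set \<Rightarrow> nat set \<Rightarrow> (nat \<times> nat) set \<Rightarrow> bool" where
  "reduced_graph n f E F E' \<longleftrightarrow>
     E' \<subseteq> {(j, i). (j, i) \<in> E \<and> j \<notin> F \<and> i \<notin> F} \<and>
     (\<forall>i \<in> {1..n} - F. card {j. (j, i) \<in> E \<and> j \<notin> F \<and> (j, i) \<notin> E'} \<le> f)"

definition reduced_graphs ::
  "nat \<Rightarrow> nat \<Rightarrow> (nat \<times> nat) set \<Rightarrow> nat set \<Rightarrow> (nat \<times> nat) set set" where
  "reduced_graphs n f E F = {E'. reduced_graph n f E F E'}"

definition source_component :: "nat set \<Rightarrow> (nat \<times> nat) set \<Rightarrow> nat set" where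
  "source_component W E' = {s \<in> W. \<forall>v \<in> W. v \<noteq> s \<longrightarrow> (s, v) \<in> E'\<^sup>+}"

definition sp :: "nat \<Rightarrow> nat \<Rightarrow> (nat \<Rightarrow> nat \<Rightarrow> real) \<Rightarrow> nat" where
  "sp k n A =
     (if \<forall>r \<in> {1..k}. (\<Sum>c \<in> {1..n}. A r c) > 0
      then (LEAST s. \<forall>C \<subseteq> {1..n}. card C = s \<longrightarrow> (\<forall>r \<in> {1..k}. (\<Sum>c \<in> C. A r c) > 0))
      else n + 1)"

definition condition1 ::
  "nat \<Rightarrow> nat \<Rightarrow> nat \<Rightarrow> (nat \<times> nat) set \<Rightarrow> (nat \<Rightarrow> nat \<Rightarrow> real) \<Rightarrow> bool" where
  "condition1 n f k E A \<longleftrightarrow>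
     (\<forall>F' \<subseteq> {1..n}. card F' \<le> f \<longrightarrow>
        (\<forall>E' \<in> reduced_graphs n f E F'.
           card (source_component ({1..n} - F') E') \<ge> max (f + 1) (sp k n A)))"

definition admissible :: "real \<Rightarrow> (real \<Rightarrow> real) \<Rightarrow> bool" where
  "admissible L h \<longleftrightarrow>
     convex_on UNIV h \<and> (\<forall>x y. \<bar>h x - h y\<bar> \<le> L * \<bar>x - y\<bar>) \<and>
     {x. \<forall>z. h x \<le> h z} \<noteq> {} \<and> compact {x. \<forall>z. h x \<le> h z}"

definition assignment_matrix :: "nat \<Rightarrow> nat \<Rightarrow> (nat \<Rightarrow> nat \<Rightarrow> real) \<Rightarrow> bool" where
  "assignment_matrix k n A \<longleftrightarrow>
     (\<forall>j \<in> {1..k}. \<forall>i \<in> {1..n}. A j i \<ge> 0) \<and> (\<forall>i \<in> {1..n}. (\<Sum>j \<in> {1..k}. A j i) = 1)"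

definition step_sizes :: "(nat \<Rightarrow> real) \<Rightarrow> bool" where
  "step_sizes \<alpha> \<longleftrightarrow> (\<forall>t. \<alpha> t \<ge> 0 \<and> \<alpha> (Suc t) \<le> \<alpha> t) \<and>
     \<not> summable \<alpha> \<and> summable (\<lambda>t. (\<alpha> t)\<^sup>2)"

definition local_cost ::
  "nat \<Rightarrow> (nat \<Rightarrow> nat \<Rightarrow> real) \<Rightarrow> (nat \<Rightarrow> real \<Rightarrow> real) \<Rightarrow> nat \<Rightarrow> real \<Rightarrow> real" where
  "local_cost k A h i z = (\<Sum>j \<in> {1..k}. A j i * h j z)"

definition is_subgradient :: "(real \<Rightarrow> real) \<Rightarrow> real \<Rightarrow> real \<Rightarrow> bool" where
  "is_subgradient g x d \<longleftrightarrow> (\<forall>z. g z \<ge> g x + d * (z - x))"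

text \<open>One iteration (iteration t+1) of Algorithm 2 at non-faulty agent i. recv i j is the
  value agent i received from in-neighbour j in that iteration; the f smallest (set Sm) and
  f largest (set Lg) received values are discarded, the remaining senders form Nst.\<close>
definition alg2_step ::
  "nat \<Rightarrow> (nat \<times> nat) set \<Rightarrow> nat \<Rightarrow> (nat \<Rightarrow> real) \<Rightarrow> real \<Rightarrow> real \<Rightarrow> real \<Rightarrow> real \<Rightarrow> bool" where
  "alg2_step f E i recv xold a d xnew \<longleftrightarrow>
     (\<exists>Nst Sm Lg. Nst \<union> Sm \<union> Lg = in_nbrs E i \<and>
        Nst \<inter> Sm = {} \<and> Nst \<inter> Lg = {} \<and> Sm \<inter> Lg = {} \<and>
        card Sm = f \<and> card Lg = f \<and>
        (\<forall>u \<in> Sm. \<forall>v \<in> Nst \<union> Lg. recv u \<le> recv v) \<and>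
        (\<forall>u \<in> Lg. \<forall>v \<in> Nst \<union> Sm. recv v \<le> recv u) \<and>
        xnew = (xold + (\<Sum>j \<in> Nst. recv j)) / (real (card Nst) + 1) - a * d)"

text \<open>Phi(t, r) = M(t) ... M(r) over index set S, with Phi(t, t+1) = I.\<close>
primrec prodlen :: "(nat \<Rightarrow> nat \<Rightarrow> nat \<Rightarrow> real) \<Rightarrow> nat set \<Rightarrow> nat \<Rightarrow> nat \<Rightarrow> nat \<Rightarrow> nat \<Rightarrow> real" where
  "prodlen M S r 0 = (\<lambda>i j. if i = j then 1 else 0)"
| "prodlen M S r (Suc m) = (\<lambda>i j. \<Sum>l \<in> S. M (r + m) i l * prodlen M S r m l j)"

definition Phi :: "(nat \<Rightarrow> nat \<Rightarrow> nat \<Rightarrow> real) \<Rightarrow> nat set \<Rightarrow> nat \<Rightarrow> nat \<Rightarrow> nat \<Rightarrow> nat \<Rightarrow> real" where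
  "Phi M S t r = prodlen M S r (t + 1 - r)"

end

theory Submission
  imports Defs
begin

lemma repr:
  fixes M :: "nat \<Rightarrow> nat \<Rightarrow> nat \<Rightarrow> real" and S :: "nat set"
  assumes fin: "finite S"
    and rec: "\<forall>t. \<forall>i\<in>S. x (Suc t) i = (\<Sum>j\<in>S. M t i j * x t j) - \<alpha> t * d t i"
  shows "\<forall>i\<in>S. x t i = (\<Sum>j\<in>S. prodlen M S 0 t i j * x 0 j)
           - (\<Sum>s<t. \<alpha> s * (\<Sum>j\<in>S. prodlen M S (Suc s) (t - Suc s) i j * d s j))"
proof (induction t)
  case 0
  have "(if i = j then 1 else 0) * x 0 j = (if i = j then x 0 j else (0::real))" for i j by simp
  then show ?case using fin by (simp add: sum.delta)
next
  case (Suc t)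
  show ?case
  proof
    fix i assume i: "i \<in> S"
    let ?P = "prodlen M S"
    have A: "(\<Sum>l\<in>S. M t i l * (\<Sum>j\<in>S. ?P 0 t l j * x 0 j)) = (\<Sum>j\<in>S. ?P 0 (Suc t) i j * x 0 j)"
      by (simp add: sum_distrib_left sum_distrib_right mult.assoc) (rule sum.swap)
    have B: "(\<Sum>l\<in>S. M t i l * (\<Sum>j\<in>S. ?P (Suc s) (t - Suc s) l j * d s j))
          = (\<Sum>j\<in>S. ?P (Suc s) (Suc t - Suc s) i j * d s j)" if "s < t" for s
    proof -
      have e: "Suc t - Suc s = Suc (t - Suc s)" "Suc s + (t - Suc s) = t" using that by auto
      show ?thesis unfolding e(1) prodlen.simps e(2)
        by (simp add: sum_distrib_left sum_distrib_right mult.assoc) (rule sum.swap)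
    qed
    have C: "(\<Sum>j\<in>S. ?P (Suc t) (Suc t - Suc t) i j * d t j) = d t i"
    proof -
      have "(if i = j then 1 else 0) * d t j = (if i = j then d t j else (0::real))" for j by simp
      then show ?thesis using fin i by (simp add: sum.delta)
    qed
    have D: "(\<Sum>l\<in>S. M t i l * (\<Sum>s<t. \<alpha> s * (\<Sum>j\<in>S. ?P (Suc s) (t - Suc s) l j * d s j)))
        = (\<Sum>s<t. \<alpha> s * (\<Sum>l\<in>S. M t i l * (\<Sum>j\<in>S. ?P (Suc s) (t - Suc s) l j * d s j)))"
      by (simp add: sum_distrib_left mult.left_commute) (rule sum.swap)
    have "x (Suc t) i = (\<Sum>l\<in>S. M t i l * x t l) - \<alpha> t * d t i" using rec i by auto
    also have "\<dots> = (\<Sum>l\<in>S. M t i l * (\<Sum>j\<in>S. ?P 0 t l j * x 0 j))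
       - (\<Sum>l\<in>S. M t i l * (\<Sum>s<t. \<alpha> s * (\<Sum>j\<in>S. ?P (Suc s) (t - Suc s) l j * d s j))) - \<alpha> t * d t i"
      using Suc.IH by (simp add: right_diff_distrib sum_subtractf)
    also have "\<dots> = (\<Sum>j\<in>S. ?P 0 (Suc t) i j * x 0 j)
       - (\<Sum>s<Suc t. \<alpha> s * (\<Sum>j\<in>S. ?P (Suc s) (Suc t - Suc s) i j * d s j))"
      unfolding A D using B C by simp
    finally show "x (Suc t) i = (\<Sum>j\<in>S. ?P 0 (Suc t) i j * x 0 j)
       - (\<Sum>s<Suc t. \<alpha> s * (\<Sum>j\<in>S. ?P (Suc s) (Suc t - Suc s) i j * d s j))" .
  qed
qed

lemma conv0:
  fixes a :: "nat \<Rightarrow> real"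
  assumes a0: "\<And>t. a t \<ge> 0" and lim: "a \<longlonglongrightarrow> 0" and r: "0 \<le> \<rho>" "\<rho> < 1"
  shows "(\<lambda>t. \<Sum>s<t. a s * \<rho> ^ (t - Suc s)) \<longlonglongrightarrow> 0"
proof -
  define c where "c t = (\<Sum>s<t. a s * \<rho> ^ (t - Suc s))" for t
  have c0: "c t \<ge> 0" for t unfolding c_def using a0 r by (auto intro!: sum_nonneg)
  have crec: "c (Suc t) = \<rho> * c t + a t" for t
  proof -
    have "c (Suc t) = (\<Sum>s<t. a s * \<rho> ^ (Suc t - Suc s)) + a t" unfolding c_def by simp
    also have "(\<Sum>s<t. a s * \<rho> ^ (Suc t - Suc s)) = \<rho> * c t" unfolding c_def sum_distrib_left
    proof (rule sum.cong)
      fix s assume "s \<in> {..<t}"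
      then have "t - s = Suc (t - Suc s)" by auto
      then show "a s * \<rho> ^ (Suc t - Suc s) = \<rho> * (a s * \<rho> ^ (t - Suc s))" by simp
    qed simp
    finally show ?thesis by simp
  qed
  show ?thesis unfolding c_def[symmetric]
  proof (rule LIMSEQ_I)
    fix e :: real assume e: "e > 0"
    have "(e/2) * (1 - \<rho>) > 0" using e r by simp
    then have "\<forall>\<^sub>F t in sequentially. a t < (e/2) * (1 - \<rho>)"
      using lim unfolding order_tendsto_iff by blast
    then obtain T where T: "\<And>t. t \<ge> T \<Longrightarrow> a t < (e/2) * (1 - \<rho>)"
      by (auto simp: eventually_sequentially)
    have bnd: "c (T + m) \<le> e/2 + \<rho> ^ m * c T" for m
    proof (induction m)
      case 0 then show ?case using e by simp
    next
      case (Suc m)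
      have "c (T + Suc m) = \<rho> * c (T + m) + a (T + m)" using crec by simp
      also have "\<dots> \<le> \<rho> * (e/2 + \<rho> ^ m * c T) + (e/2) * (1 - \<rho>)"
        using Suc T[of "T+m"] r by (intro add_mono mult_left_mono) auto
      also have "\<dots> = e/2 + \<rho> ^ Suc m * c T" by (simp add: field_simps)
      finally show ?case .
    qed
    have "(\<lambda>m. \<rho> ^ m * c T) \<longlonglongrightarrow> 0"
      using tendsto_mult[OF LIMSEQ_power_zero[of \<rho>] tendsto_const[of "c T"]] r by simp
    moreover have "e/2 > 0" using e by simp
    ultimately have "\<forall>\<^sub>F m in sequentially. \<rho> ^ m * c T < e/2"
      unfolding order_tendsto_iff by blast
    then obtain K where K: "\<And>m. m \<ge> K \<Longrightarrow> \<rho> ^ m * c T < e/2"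
      by (auto simp: eventually_sequentially)
    show "\<exists>no. \<forall>t\<ge>no. norm (c t - 0) < e"
    proof (intro exI allI impI)
      fix t assume "t \<ge> T + K"
      then have m: "t = T + (t - T)" "t - T \<ge> K" by arith+
      have "c t \<le> e/2 + \<rho> ^ (t - T) * c T" using bnd[of "t - T"] m(1) by simp
      then show "norm (c t - 0) < e" using K[OF m(2)] c0[of t] by simp
    qed
  qed
qed

lemma subgrad_bound:
  assumes "is_subgradient g x d" "\<forall>a b. \<bar>g a - g b\<bar> \<le> L * \<bar>a - b\<bar>"
  shows "\<bar>d\<bar> \<le> L"
proof -
  have "g (x+1) \<ge> g x + d * ((x+1) - x)" "g (x-1) \<ge> g x + d * ((x-1) - x)"
    using assms(1) unfolding is_subgradient_def by blast+
  then have 1: "g (x+1) \<ge> g x + d" "g (x-1) \<ge> g x - d" by simp_all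
  have 2: "\<bar>g (x+1) - g x\<bar> \<le> L" "\<bar>g (x-1) - g x\<bar> \<le> L" using assms(2)[rule_format, of "x+1" x] assms(2)[rule_format, of "x-1" x] by auto
  show ?thesis using 1 2 by linarith
qed

theorem lemma7:
  fixes n f k :: nat
    and E :: "(nat \<times> nat) set"
    and F :: "nat set"
    and A :: "nat \<Rightarrow> nat \<Rightarrow> real"
    and L :: real
    and h :: "nat \<Rightarrow> real \<Rightarrow> real"
    and \<alpha> :: "nat \<Rightarrow> real"
    and x :: "nat \<Rightarrow> nat \<Rightarrow> real"
    and d :: "nat \<Rightarrow> nat \<Rightarrow> real"
    and recv :: "nat \<Rightarrow> nat \<Rightarrow> nat \<Rightarrow> real"
    and M :: "nat \<Rightarrow> nat \<Rightarrow> nat \<Rightarrow> real"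
    and \<beta> :: real
    and \<pi> :: "nat \<Rightarrow> nat \<Rightarrow> real"
    and y :: "nat \<Rightarrow> real"
  defines "NF \<equiv> {1..n} - F"
  assumes graph: "digraph_ok n E"
    and faulty: "F \<subseteq> {1..n}" "card F \<le> f"
    and assign: "assignment_matrix k n A"
    and adm: "\<forall>j \<in> {1..k}. admissible L (h j)"
    and steps: "step_sizes \<alpha>"
    and cond1: "condition1 n f k E A"
    \<comment> \<open>d t i is a subgradient of g_i at x t i (non-faulty i)\<close>
    and subgrad: "\<forall>t. \<forall>i \<in> NF. is_subgradient (local_cost k A h i) (x t i) (d t i)"
    \<comment> \<open>messages: non-faulty senders send their current state, faulty ones arbitrary values\<close>
    and msgs: "\<forall>t. \<forall>i \<in> NF. \<forall>j \<in> in_nbrs E i. j \<notin> F \<longrightarrow> recv t i j = x t j"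
    \<comment> \<open>Algorithm 2: iteration t+1 computes x (t+1) from the values received\<close>
    and alg: "\<forall>t. \<forall>i \<in> NF. alg2_step f E i (recv t i) (x t i) (\<alpha> t) (d t i) (x (Suc t) i)"
    \<comment> \<open>known facts: matrix representation of the non-faulty dynamics\<close>
    and beta: "0 < \<beta>" "\<beta> < 1"
    and Mstoch: "\<forall>t. \<forall>i \<in> NF. (\<forall>j \<in> NF. M t i j \<ge> 0) \<and> (\<Sum>j \<in> NF. M t i j) = 1"
    and Mrep: "\<forall>t. \<forall>i \<in> NF. x (Suc t) i = (\<Sum>j \<in> NF. M t i j * x t j) - \<alpha> t * d t i"
    and MH: "\<forall>t. \<exists>E' \<in> reduced_graphs n f E F. \<forall>i \<in> NF. \<forall>j \<in> NF.
               M t i j \<ge> \<beta> * (if i = j \<or> (j, i) \<in> E' then 1 else 0)"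
    \<comment> \<open>known facts under Condition 1: ergodicity of the backward products\<close>
    and pi_stoch: "\<forall>r. (\<forall>j \<in> NF. \<pi> r j \<ge> 0) \<and> (\<Sum>j \<in> NF. \<pi> r j) = 1"
    and pi_lim: "\<forall>r. \<forall>i \<in> NF. \<forall>j \<in> NF. (\<lambda>t. Phi M NF t r i j) \<longlonglongrightarrow> \<pi> r j"
    and pi_rate: "\<forall>r t. r \<le> t \<longrightarrow> (\<forall>i \<in> NF. \<forall>j \<in> NF.
               \<bar>Phi M NF t r i j - \<pi> r j\<bar> \<le>
               (1 - \<beta> ^ (card (reduced_graphs n f E F) * card NF))
                 ^ nat \<lceil>real (t - r + 1) / real (card (reduced_graphs n f E F) * card NF)\<rceil>)"
    and y_def: "\<forall>t. y t = (\<Sum>j \<in> NF. \<pi> 0 j * x 0 j)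
               - (\<Sum>r = 1..t. \<alpha> (r - 1) * (\<Sum>j \<in> NF. \<pi> r j * d (r - 1) j))"
  shows "\<forall>i \<in> NF. (\<lambda>t. \<bar>y t - x t i\<bar>) \<longlonglongrightarrow> 0"
proof
  fix i assume i: "i \<in> NF"
  have finNF: "finite NF" unfolding NF_def by simp
  let ?RG = "reduced_graphs n f E F"
  define \<nu> where "\<nu> = card ?RG * card NF"
  have "E \<subseteq> {1..n} \<times> {1..n}" using graph unfolding digraph_ok_def by simp
  then have Efin: "finite E" by (rule finite_subset) simp
  have "?RG \<subseteq> Pow E" unfolding reduced_graphs_def reduced_graph_def by auto
  then have finRG: "finite ?RG" by (rule finite_subset) (simp add: Efin)
  obtain E0 where "E0 \<in> ?RG" using MH by blast
  then have RGne: "?RG \<noteq> {}" by blast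
  have NFne: "NF \<noteq> {}" using i by blast
  have nu: "\<nu> > 0" unfolding \<nu>_def using finRG RGne finNF NFne by (simp add: card_gt_0_iff)
  define \<gamma> where "\<gamma> = 1 - \<beta> ^ \<nu>"
  have bpos: "\<beta> ^ \<nu> > 0" using beta by simp
  have ble: "\<beta> ^ \<nu> \<le> 1" using beta by (simp add: power_le_one)
  have g0: "0 \<le> \<gamma>" "\<gamma> < 1" unfolding \<gamma>_def using bpos ble by auto
  define \<rho> where "\<rho> = root \<nu> \<gamma>"
  have r0: "0 \<le> \<rho>" "\<rho> < 1" unfolding \<rho>_def using g0 nu by auto
  have rpow: "\<rho> ^ \<nu> = \<gamma>" unfolding \<rho>_def using g0 nu by simp
  let ?P = "prodlen M NF"
  have pi01: "0 \<le> \<pi> r j \<and> \<pi> r j \<le> 1" if "j \<in> NF" for r j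
  proof -
    have "\<pi> r j \<le> (\<Sum>j\<in>NF. \<pi> r j)"
      using pi_stoch that finNF by (intro member_le_sum) auto
    then show ?thesis using pi_stoch that by auto
  qed
  have rate: "\<bar>\<pi> (Suc s) j - ?P (Suc s) (t - Suc s) i j\<bar> \<le> \<rho> ^ (t - Suc s)"
    if st: "s < t" and j: "j \<in> NF" for s t j
  proof (cases "t - Suc s = 0")
    case True
    then show ?thesis using pi01[OF j, of "Suc s"] by auto
  next
    case False
    define m where "m = t - Suc s"
    have m0: "m > 0" using False m_def by simp
    have "Suc s \<le> t - 1" using False st by simp
    from pi_rate[rule_format, OF this, of i j] i j
    have "\<bar>Phi M NF (t - 1) (Suc s) i j - \<pi> (Suc s) j\<bar> \<le> \<gamma> ^ nat \<lceil>real (t - 1 - Suc s + 1) / real \<nu>\<rceil>"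
      unfolding \<gamma>_def \<nu>_def by blast
    moreover have eqP: "Phi M NF (t - 1) (Suc s) = ?P (Suc s) m" unfolding Phi_def m_def using False by (simp add: Suc_diff_Suc)
    moreover have eqm: "t - 1 - Suc s + 1 = m" unfolding m_def using False by simp
    ultimately have 1: "\<bar>?P (Suc s) m i j - \<pi> (Suc s) j\<bar> \<le> \<gamma> ^ nat \<lceil>real m / real \<nu>\<rceil>" by (simp only: eqP eqm)
    define c where "c = nat \<lceil>real m / real \<nu>\<rceil>"
    have "real m / real \<nu> \<le> real c" unfolding c_def by linarith
    then have "real m \<le> real \<nu> * real c" using nu by (simp add: field_simps)
    then have mc: "m \<le> \<nu> * c" by (metis of_nat_le_iff of_nat_mult)
    have "\<gamma> ^ c = \<rho> ^ (\<nu> * c)" by (simp add: power_mult rpow)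
    also have "\<dots> \<le> \<rho> ^ m" using mc r0 by (intro power_decreasing) auto
    finally show ?thesis using 1 unfolding c_def m_def by (simp add: abs_minus_commute)
  qed
  have lipg: "\<forall>a b. \<bar>local_cost k A h j a - local_cost k A h j b\<bar> \<le> L * \<bar>a - b\<bar>" if j: "j \<in> {1..n}" for j
  proof (intro allI)
    fix a b
    have "\<bar>local_cost k A h j a - local_cost k A h j b\<bar> = \<bar>\<Sum>l\<in>{1..k}. A l j * (h l a - h l b)\<bar>"
      unfolding local_cost_def by (simp add: right_diff_distrib sum_subtractf)
    also have "\<dots> \<le> (\<Sum>l\<in>{1..k}. \<bar>A l j * (h l a - h l b)\<bar>)" by (rule sum_abs)
    also have "\<dots> \<le> (\<Sum>l\<in>{1..k}. A l j * (L * \<bar>a - b\<bar>))"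
    proof (rule sum_mono)
      fix l assume l: "l \<in> {1..k}"
      have A0: "A l j \<ge> 0" using assign l j unfolding assignment_matrix_def by auto
      have "\<bar>h l a - h l b\<bar> \<le> L * \<bar>a - b\<bar>" using adm l unfolding admissible_def by auto
      then show "\<bar>A l j * (h l a - h l b)\<bar> \<le> A l j * (L * \<bar>a - b\<bar>)"
        using A0 by (simp add: abs_mult mult_left_mono)
    qed
    also have "\<dots> = L * \<bar>a - b\<bar>" using assign j unfolding assignment_matrix_def
      by (simp add: sum_distrib_right[symmetric])
    finally show "\<bar>local_cost k A h j a - local_cost k A h j b\<bar> \<le> L * \<bar>a - b\<bar>" .
  qed
  have dbound: "\<bar>d s j\<bar> \<le> L" if j: "j \<in> NF" for s j
    using subgrad_bound[of "local_cost k A h j" "x s j" "d s j" L] subgrad j lipg[of j]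
    unfolding NF_def by auto
  have a0: "\<alpha> t \<ge> 0" for t using steps unfolding step_sizes_def by auto
  have "(\<lambda>t. (\<alpha> t)\<^sup>2) \<longlonglongrightarrow> 0" using steps summable_LIMSEQ_zero unfolding step_sizes_def by blast
  then have "(\<lambda>t. sqrt ((\<alpha> t)\<^sup>2)) \<longlonglongrightarrow> sqrt 0" by (rule tendsto_real_sqrt)
  then have alim: "\<alpha> \<longlonglongrightarrow> 0" using a0 by simp
  have rep: "x t i = (\<Sum>j\<in>NF. ?P 0 t i j * x 0 j)
           - (\<Sum>s<t. \<alpha> s * (\<Sum>j\<in>NF. ?P (Suc s) (t - Suc s) i j * d s j))" for t
    using repr[OF finNF Mrep] i by blast
  have yt: "y t = (\<Sum>j \<in> NF. \<pi> 0 j * x 0 j) - (\<Sum>s<t. \<alpha> s * (\<Sum>j \<in> NF. \<pi> (Suc s) j * d s j))" for t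
    using y_def by (simp add: sum.atLeast1_atMost_eq)
  define err where "err t = y t - x t i" for t
  have err_eq: "err t = (\<Sum>j\<in>NF. (\<pi> 0 j - ?P 0 t i j) * x 0 j)
      - (\<Sum>s<t. \<alpha> s * (\<Sum>j\<in>NF. (\<pi> (Suc s) j - ?P (Suc s) (t - Suc s) i j) * d s j))" for t
    unfolding err_def yt rep
    by (simp add: left_diff_distrib sum_subtractf right_diff_distrib)
  define a where "a t = (\<Sum>j\<in>NF. \<bar>\<pi> 0 j - ?P 0 t i j\<bar> * \<bar>x 0 j\<bar>)" for t
  define c where "c t = (\<Sum>s<t. \<alpha> s * \<rho> ^ (t - Suc s))" for t
  have bnd: "norm (err t) \<le> a t + (real (card NF) * L) * c t" for t
  proof -
    have 1: "\<bar>\<Sum>j\<in>NF. (\<pi> 0 j - ?P 0 t i j) * x 0 j\<bar> \<le> a t"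
      unfolding a_def by (rule order_trans[OF sum_abs]) (simp add: abs_mult)
    have 2: "\<bar>\<Sum>s<t. \<alpha> s * (\<Sum>j\<in>NF. (\<pi> (Suc s) j - ?P (Suc s) (t - Suc s) i j) * d s j)\<bar>
        \<le> (\<Sum>s<t. \<alpha> s * (real (card NF) * L * \<rho> ^ (t - Suc s)))"
    proof (rule order_trans[OF sum_abs], rule sum_mono)
      fix s assume s: "s \<in> {..<t}"
      have "\<bar>\<Sum>j\<in>NF. (\<pi> (Suc s) j - ?P (Suc s) (t - Suc s) i j) * d s j\<bar>
          \<le> (\<Sum>j\<in>NF. \<rho> ^ (t - Suc s) * L)"
      proof (rule order_trans[OF sum_abs], rule sum_mono)
        fix j assume j: "j \<in> NF"
        show "\<bar>(\<pi> (Suc s) j - ?P (Suc s) (t - Suc s) i j) * d s j\<bar> \<le> \<rho> ^ (t - Suc s) * L"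
          unfolding abs_mult using rate[of s t j] s j dbound[OF j, of s]
          by (intro mult_mono) auto
      qed
      also have "\<dots> = real (card NF) * L * \<rho> ^ (t - Suc s)" by simp
      finally show "\<bar>\<alpha> s * (\<Sum>j\<in>NF. (\<pi> (Suc s) j - ?P (Suc s) (t - Suc s) i j) * d s j)\<bar>
          \<le> \<alpha> s * (real (card NF) * L * \<rho> ^ (t - Suc s))"
        unfolding abs_mult using a0[of s] by (simp add: mult_left_mono)
    qed
    have 3: "(\<Sum>s<t. \<alpha> s * (real (card NF) * L * \<rho> ^ (t - Suc s))) = (real (card NF) * L) * c t"
      unfolding c_def sum_distrib_left by (rule sum.cong) auto
    show ?thesis unfolding err_eq real_norm_def using 1 2 3 by linarith
  qed
  have alim0: "a \<longlonglongrightarrow> 0"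
    unfolding a_def
  proof (rule tendsto_null_sum)
    fix j assume j: "j \<in> NF"
    have "(\<lambda>t. Phi M NF t 0 i j) \<longlonglongrightarrow> \<pi> 0 j" using pi_lim i j by blast
    then have "(\<lambda>t. ?P 0 (Suc t) i j) \<longlonglongrightarrow> \<pi> 0 j" unfolding Phi_def by simp
    then have "(\<lambda>t. ?P 0 t i j) \<longlonglongrightarrow> \<pi> 0 j" by (rule LIMSEQ_imp_Suc)
    then have "(\<lambda>t. \<bar>\<pi> 0 j - ?P 0 t i j\<bar>) \<longlonglongrightarrow> \<bar>\<pi> 0 j - \<pi> 0 j\<bar>"
      by (intro tendsto_intros)
    then have "(\<lambda>t. \<bar>\<pi> 0 j - ?P 0 t i j\<bar> * \<bar>x 0 j\<bar>) \<longlonglongrightarrow> 0 * \<bar>x 0 j\<bar>"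
      by (intro tendsto_intros) simp
    then show "(\<lambda>t. \<bar>\<pi> 0 j - ?P 0 t i j\<bar> * \<bar>x 0 j\<bar>) \<longlonglongrightarrow> 0" by simp
  qed
  have clim: "c \<longlonglongrightarrow> 0" unfolding c_def using conv0[OF a0 alim r0] .
  have "(\<lambda>t. a t + (real (card NF) * L) * c t) \<longlonglongrightarrow> 0 + (real (card NF) * L) * 0"
    by (intro tendsto_intros alim0 clim)
  then have "err \<longlonglongrightarrow> 0" using bnd by (intro Lim_null_comparison[of err]) auto
  then show "(\<lambda>t. \<bar>y t - x t i\<bar>) \<longlonglongrightarrow> 0" using tendsto_rabs_zero unfolding err_def by blast
qed

end
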